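(* Let $L$ be the real vector space of real $4\times 4$ matrices, and let $\tau:L\to L$ be a composition of a finite sequence of $3$-cyclic permutations of either rows or columns (i.e. each step cyclically permutes three of the rows, or three of the columns, of a matrix). Then there exists a continuous map (isotopy) $T:L\times[0,1]\to L$ such that $T(M,0)=M$, $T(M,1)=\tau(M)$ and $\operatorname{rank}T(M,t)=\operatorname{rank}M$ for all $M\in L$ and $t\in[0,1]$. *)

theory Defs
  imports "HOL-Analysis.Analysis"
begin

definition cyc3 :: "'n \<Rightarrow> 'n \<Rightarrow> 'n \<Rightarrow> 'n \<Rightarrow> 'n" where
  "cyc3 a b c x = (if x = a then b else if x = b then c else if x = c then a else x)"

definition row_perm :: "(4 \<Rightarrow> 4) \<Rightarrow> real^4^4 \<Rightarrow> real^4^4" where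
  "row_perm \<sigma> M = (\<chi> i j. M $ (\<sigma> i) $ j)"

definition col_perm :: "(4 \<Rightarrow> 4) \<Rightarrow> real^4^4 \<Rightarrow> real^4^4" where
  "col_perm \<sigma> M = (\<chi> i j. M $ i $ (\<sigma> j))"

definition cyclic3_op :: "(real^4^4 \<Rightarrow> real^4^4) \<Rightarrow> bool" where
  "cyclic3_op f \<longleftrightarrow> (\<exists>a b c. a \<noteq> b \<and> b \<noteq> c \<and> a \<noteq> c \<and>
      (f = row_perm (cyc3 a b c) \<or> f = col_perm (cyc3 a b c)))"

end

theory Submission
  imports Defs
begin

definition Amat :: "(4 \<Rightarrow> 4) \<Rightarrow> real \<Rightarrow> real^4^4" where
  "Amat \<sigma> t = (\<chi> i k. (1-t)*(if i=k then 1 else 0) + t*(if \<sigma> i = k then 1 else 0))"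

lemma sumd: fixes g :: "'n::finite \<Rightarrow> real"
  shows "(\<Sum>k\<in>UNIV. (a*(if i=k then 1 else 0) + b*(if j=k then 1 else 0)) * g k) = a*g i + b*g j"
proof -
  have "(\<Sum>k\<in>UNIV. (a*(if i=k then 1 else 0) + b*(if j=k then 1 else 0)) * g k)
     = (\<Sum>k\<in>UNIV. (if i=k then a*g k else 0)) + (\<Sum>k\<in>UNIV. (if j=k then b*g k else 0))"
    unfolding sum.distrib[symmetric] by (rule sum.cong) (auto simp: algebra_simps)
  also have "\<dots> = a*g i + b*g j" by simp
  finally show ?thesis .
qed
lemma sumd2: fixes g :: "'n::finite \<Rightarrow> real"
  shows "(\<Sum>k\<in>UNIV. g k * (a*(if i=k then 1 else 0) + b*(if j=k then 1 else 0))) = a*g i + b*g j"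
  using sumd[of a i b j g] by (simp add: mult.commute)
lemma row_eq: "(1-t) *\<^sub>R M + t *\<^sub>R row_perm \<sigma> M = Amat \<sigma> t ** M"
  by (simp add: vec_eq_iff row_perm_def Amat_def matrix_matrix_mult_def sumd)

lemma col_eq: "(1-t) *\<^sub>R M + t *\<^sub>R col_perm \<sigma> M = M ** transpose (Amat \<sigma> t)"
  by (simp add: vec_eq_iff col_perm_def Amat_def matrix_matrix_mult_def transpose_def sumd2)

lemma cubic:
  fixes p q y1 y2 y3 :: real
  assumes "p*y1 + q*y2 = 0" "p*y2 + q*y3 = 0" "p*y3 + q*y1 = 0"
  shows "(p^3+q^3)*y1 = 0"
proof -
  have a: "p*y1 = -(q*y2)" "p*y2 = -(q*y3)" "p*y3 = -(q*y1)" using assms by linarith+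
  have "p^3*y1 = p^2*(p*y1)" by (simp add: power3_eq_cube power2_eq_square)
  also have "\<dots> = -(p*q)*(p*y2)" unfolding a(1) by (simp add: power2_eq_square algebra_simps)
  also have "\<dots> = (q^2)*(p*y3)" unfolding a(2) by (simp add: power2_eq_square algebra_simps)
  also have "\<dots> = -(q^3)*y1" unfolding a(3) by (simp add: power3_eq_cube power2_eq_square algebra_simps)
  finally show ?thesis by (simp add: algebra_simps)
qed

lemma cubic0:
  fixes p q y1 y2 y3 :: real
  assumes "p \<ge> 0" "q \<ge> 0" "p + q = 1" "p*y1 + q*y2 = 0" "p*y2 + q*y3 = 0" "p*y3 + q*y1 = 0"
  shows "y1 = 0"
proof -
  have e: "(p^3+q^3)*y1 = 0" using cubic assms(4-6) by blast
  have "p^3 + q^3 > 0"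
  proof (cases "p > 0")
    case True then show ?thesis using assms(2) by (simp add: add_pos_nonneg)
  next
    case False then have "q > 0" using assms by auto
    then show ?thesis using assms(1) by (simp add: add_nonneg_pos)
  qed
  with e show ?thesis by simp
qed

lemma Amat_mulv: "(Amat \<sigma> t *v x) $ i = (1-t) * x $ i + t * x $ (\<sigma> i)"
  by (simp add: Amat_def matrix_vector_mult_def sumd)

lemma Amat_inv:
  assumes "a \<noteq> b" "b \<noteq> c" "a \<noteq> c" "0 \<le> t" "t \<le> 1"
  shows "invertible (Amat (cyc3 a b c) t)"
proof -
  have "\<forall>x. Amat (cyc3 a b c) t *v x = 0 \<longrightarrow> x = 0"
  proof (intro allI impI)
    fix x :: "real^4" assume h: "Amat (cyc3 a b c) t *v x = 0"
    have e: "\<And>i. (1-t) * x $ i + t * x $ (cyc3 a b c i) = 0"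
      using h by (metis Amat_mulv zero_index)
    have ea: "(1-t) * x $ a + t * x $ b = 0" using e[of a] by (simp add: cyc3_def)
    have eb: "(1-t) * x $ b + t * x $ c = 0" using e[of b] assms by (simp add: cyc3_def)
    have ec: "(1-t) * x $ c + t * x $ a = 0" using e[of c] assms by (simp add: cyc3_def)
    have "x $ a = 0" using cubic0[OF _ _ _ ea eb ec] assms by simp
    moreover have "x $ b = 0" using cubic0[OF _ _ _ eb ec ea] assms by simp
    moreover have "x $ c = 0" using cubic0[OF _ _ _ ec ea eb] assms by simp
    moreover have "\<And>i. i \<noteq> a \<Longrightarrow> i \<noteq> b \<Longrightarrow> i \<noteq> c \<Longrightarrow> x $ i = 0"
    proof -
      fix i assume "i \<noteq> a" "i \<noteq> b" "i \<noteq> c"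
      then show "x $ i = 0" using e[of i] by (simp add: cyc3_def algebra_simps)
    qed
    ultimately show "x = 0" by (metis vec_eq_iff zero_index)
  qed
  then show ?thesis using matrix_left_invertible_ker invertible_left_inverse by blast
qed

lemma rank_left_inv:
  fixes A M :: "real^4^4"
  assumes "invertible A" shows "rank (A ** M) = rank M"
proof -
  obtain B where B: "B ** A = mat 1" using assms invertible_left_inverse by blast
  have "M = B ** (A ** M)" by (metis matrix_mul_assoc B matrix_mul_lid)
  then have "rank M \<le> rank (A ** M)" by (metis rank_mul_le_right)
  then show ?thesis using rank_mul_le_right[of A M] by simp
qed

lemma rank_right_inv:
  fixes A M :: "real^4^4"
  assumes "invertible A" shows "rank (M ** A) = rank M"
proof -
  obtain B where B: "A ** B = mat 1" using assms invertible_right_inverse by blast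
  have "M = (M ** A) ** B" by (metis matrix_mul_assoc B matrix_mul_rid)
  then have "rank M \<le> rank (M ** A)" by (metis rank_mul_le_left)
  then show ?thesis using rank_mul_le_left[of M A] by simp
qed

lemma single:
  assumes "cyclic3_op f" "0 \<le> t" "t \<le> 1"
  shows "rank ((1-t) *\<^sub>R X + t *\<^sub>R f X) = rank X" and "linear f"
proof -
  obtain a b c where d: "a \<noteq> b" "b \<noteq> c" "a \<noteq> c"
    and f: "f = row_perm (cyc3 a b c) \<or> f = col_perm (cyc3 a b c)"
    using assms(1) unfolding cyclic3_op_def by blast
  have inv: "invertible (Amat (cyc3 a b c) t)" using Amat_inv d assms by blast
  show "rank ((1-t) *\<^sub>R X + t *\<^sub>R f X) = rank X"
    using f
  proof
    assume "f = row_perm (cyc3 a b c)"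
    then show ?thesis by (simp add: row_eq rank_left_inv inv)
  next
    assume "f = col_perm (cyc3 a b c)"
    then show ?thesis by (simp add: col_eq rank_right_inv inv transpose_invertible)
  qed
  show "linear f" using f
    by (auto intro!: linearI simp: vec_eq_iff row_perm_def col_perm_def)
qed

lemma main:
  "\<forall>f \<in> set fs. cyclic3_op f \<Longrightarrow> \<exists>T :: (real^4^4) \<times> real \<Rightarrow> real^4^4.
           continuous_on (UNIV \<times> {0..1}) T \<and>
           (\<forall>M. T (M, 0) = M) \<and> (\<forall>M. T (M, 1) = foldr (\<circ>) fs id M) \<and>
           (\<forall>M. \<forall>t\<in>{0..1}. rank (T (M, t)) = rank M)"
proof (induction fs)
  case Nil
  show ?case by (rule exI[of _ fst]) (auto intro: continuous_intros)
next
  case (Cons f gs)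
  have gs: "\<forall>x\<in>set gs. cyclic3_op x" using Cons.prems by simp
  obtain T :: "(real^4^4) \<times> real \<Rightarrow> real^4^4" where T: "continuous_on (UNIV \<times> {0..1}) T"
    "\<forall>M. T (M, 0) = M" "\<forall>M. T (M, 1) = foldr (\<circ>) gs id M"
    "\<forall>M. \<forall>t\<in>{0..1}. rank (T (M, t)) = rank M" using Cons.IH[OF gs] by blast
  have cf: "cyclic3_op f" using Cons.prems by simp
  have lf: "linear f" using single(2)[OF cf, of 0] by simp
  have contf: "continuous_on UNIV f" using lf by (simp add: linear_continuous_on linear_linear)
  let ?S = "\<lambda>p. (1 - snd p) *\<^sub>R T p + snd p *\<^sub>R f (T p)"
  have "continuous_on (UNIV \<times> {0..1}) ?S"
    by (intro continuous_intros T(1) continuous_on_compose2[OF contf T(1)]) auto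
  moreover have "\<forall>M. ?S (M, 0) = M" using T(2) by simp
  moreover have "\<forall>M. ?S (M, 1) = foldr (\<circ>) (f # gs) id M" using T(3) by simp
  moreover have "\<forall>M. \<forall>t\<in>{0..1}. rank (?S (M, t)) = rank M"
    using T(4) single(1)[OF cf] by simp
  ultimately show ?case by blast
qed

theorem corollary2p6:
  fixes fs :: "(real^4^4 \<Rightarrow> real^4^4) list" and \<tau> :: "real^4^4 \<Rightarrow> real^4^4"
  assumes "\<forall>f \<in> set fs. cyclic3_op f"
    and "\<tau> = foldr (\<circ>) fs id"
  shows "\<exists>T :: (real^4^4) \<times> real \<Rightarrow> real^4^4.
           continuous_on (UNIV \<times> {0..1}) T \<and>
           (\<forall>M. T (M, 0) = M) \<and> (\<forall>M. T (M, 1) = \<tau> M) \<and>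
           (\<forall>M. \<forall>t\<in>{0..1}. rank (T (M, t)) = rank M)"
  using main[OF assms(1)] assms(2) by simp

end
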